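(* Let $n\ge1$ and let $\Phi:\mathbb{R}^{n+1}\to[0,+\infty)$ be a norm. Let $\psi(\widehat\xi):=\Phi(\widehat\xi,0)$ for $\widehat\xi\in\mathbb{R}^n$ (a norm on $\mathbb{R}^n$) with dual norm $\psi^o$. Then $\psi^o(\widehat\xi^* )\le\Phi^o(\widehat\xi^*,0)$ for all $\widehat\xi^*\in\mathbb{R}^n$, and equality $\psi^o(\widehat\xi^* )=\Phi^o(\widehat\xi^*,0)$ holds for all $\widehat\xi^*\in\mathbb{R}^n$ if and only if $\Phi(\widehat\xi,\xi_{n+1})\ge\Phi(\widehat\xi,0)$ for all $(\widehat\xi,\xi_{n+1})\in\mathbb{R}^{n+1}$.
   Context: A norm on $\mathbb{R}^m$ is a convex function $\Psi:\mathbb{R}^m\to[0,+\infty)$ with $\Psi(\lambda\xi)=|\lambda|\Psi(\xi)$ and $\Psi(\xi)\ge c|\xi|$ for some $c>0$; its dual norm is $\Psi^o(\xi^* )=\sup\{\xi^*\cdot\xi:\Psi(\xi)\le1\}$. *)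

theory Defs
  imports "HOL-Analysis.Analysis"
begin

definition is_norm_fun :: "('a::real_inner \<Rightarrow> real) \<Rightarrow> bool" where
  "is_norm_fun \<Psi> \<longleftrightarrow>
     convex_on UNIV \<Psi> \<and> (\<forall>x. 0 \<le> \<Psi> x) \<and>
     (\<forall>l x. \<Psi> (l *\<^sub>R x) = \<bar>l\<bar> * \<Psi> x) \<and>
     (\<exists>c>0. \<forall>x. c * norm x \<le> \<Psi> x)"

definition dual_norm :: "('a::real_inner \<Rightarrow> real) \<Rightarrow> 'a \<Rightarrow> real" where
  "dual_norm \<Psi> y = Sup {y \<bullet> x | x. \<Psi> x \<le> 1}"

end

theory Submission
  imports Defs
begin

lemma dual_bdd:
  fixes \<Psi> :: "'a::real_inner \<Rightarrow> real"
  assumes "is_norm_fun \<Psi>"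
  shows "bdd_above {y \<bullet> x | x. \<Psi> x \<le> 1}"
proof -
  obtain c where c: "c > 0" "\<And>x. c * norm x \<le> \<Psi> x"
    using assms unfolding is_norm_fun_def by blast
  have "y \<bullet> x \<le> norm y / c" if "\<Psi> x \<le> 1" for x
  proof -
    have "c * norm x \<le> 1" using c(2)[of x] that by linarith
    hence "norm x \<le> 1 / c" using c(1) by (simp add: field_simps)
    hence "norm y * norm x \<le> norm y * (1 / c)" by (rule mult_left_mono) simp
    moreover have "y \<bullet> x \<le> norm y * norm x" by (rule norm_cauchy_schwarz)
    ultimately show ?thesis by simp
  qed
  thus ?thesis unfolding bdd_above_def by blast
qed

lemma dual_ne:
  fixes \<Psi> :: "'a::real_inner \<Rightarrow> real"
  assumes "is_norm_fun \<Psi>"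
  shows "{y \<bullet> x | x. \<Psi> x \<le> 1} \<noteq> {}"
proof -
  have "\<Psi> 0 = 0" using assms unfolding is_norm_fun_def
    by (metis abs_zero mult_zero_left scale_zero_left)
  hence "y \<bullet> 0 \<in> {y \<bullet> x | x. \<Psi> x \<le> 1}" by (intro CollectI exI[of _ 0]) simp
  thus ?thesis by blast
qed

theorem lemmaA4:
  fixes \<Phi> :: "(real^'n) \<times> real \<Rightarrow> real"
  assumes "is_norm_fun \<Phi>"
  defines "\<psi> \<equiv> (\<lambda>x. \<Phi> (x, 0))"
  shows "(\<forall>y. dual_norm \<psi> y \<le> dual_norm \<Phi> (y, 0)) \<and>
         ((\<forall>y. dual_norm \<psi> y = dual_norm \<Phi> (y, 0)) \<longleftrightarrow>
          (\<forall>x t. \<Phi> (x, 0) \<le> \<Phi> (x, t)))"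
proof -
  have N: "convex_on UNIV \<Phi>" "\<And>x. 0 \<le> \<Phi> x" "\<And>l x. \<Phi> (l *\<^sub>R x) = \<bar>l\<bar> * \<Phi> x"
    and "\<exists>c>0. \<forall>x. c * norm x \<le> \<Phi> x"
    using assms(1) unfolding is_norm_fun_def by auto
  then obtain c where c: "c > 0" "\<And>x. c * norm x \<le> \<Phi> x" by blast
  have psinorm: "is_norm_fun \<psi>"
    unfolding is_norm_fun_def
  proof (intro conjI)
    show "convex_on UNIV \<psi>"
      unfolding \<psi>_def
    proof (rule convex_onI)
      fix t :: real and x y :: "real^'n" assume "0 < t" "t < 1"
      have "\<Phi> ((1-t) *\<^sub>R (x,0) + t *\<^sub>R (y,0)) \<le> (1-t) * \<Phi> (x,0) + t * \<Phi> (y,0)"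
        using convex_onD[OF N(1), of t "(x,0)" "(y,0)"] \<open>0 < t\<close> \<open>t < 1\<close> by simp
      thus "\<Phi> ((1-t) *\<^sub>R x + t *\<^sub>R y, 0) \<le> (1-t) * \<Phi> (x,0) + t * \<Phi> (y,0)" by simp
    qed simp
    show "\<forall>x. 0 \<le> \<psi> x" using N(2) by (simp add: \<psi>_def)
    show "\<forall>l x. \<psi> (l *\<^sub>R x) = \<bar>l\<bar> * \<psi> x"
      using N(3) unfolding \<psi>_def by (metis scaleR_Pair scale_zero_right)
    show "\<exists>c>0. \<forall>x. c * norm x \<le> \<psi> x"
      using c unfolding \<psi>_def by (metis norm_Pair norm_zero power2_eq_square
          mult_zero_left add_0_right real_sqrt_abs abs_norm_cancel)
  qed
  have setsub: "{y \<bullet> x | x. \<psi> x \<le> 1} \<subseteq> {(y,0) \<bullet> z | z. \<Phi> z \<le> 1}" for y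
    unfolding \<psi>_def by force
  have ineq: "dual_norm \<psi> y \<le> dual_norm \<Phi> (y, 0)" for y
    unfolding dual_norm_def
    by (rule cSup_subset_mono[OF dual_ne[OF psinorm] dual_bdd[OF assms(1)] setsub])
  have eq: "(\<forall>y. dual_norm \<psi> y = dual_norm \<Phi> (y, 0)) \<longleftrightarrow> (\<forall>x t. \<Phi> (x, 0) \<le> \<Phi> (x, t))"
  proof
    assume H: "\<forall>x t. \<Phi> (x, 0) \<le> \<Phi> (x, t)"
    show "\<forall>y. dual_norm \<psi> y = dual_norm \<Phi> (y, 0)"
    proof
      fix y
      have "{(y,0) \<bullet> z | z. \<Phi> z \<le> 1} \<subseteq> {y \<bullet> x | x. \<psi> x \<le> 1}"
      proof
        fix r assume "r \<in> {(y,0) \<bullet> z | z. \<Phi> z \<le> 1}"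
        then obtain x t where "r = y \<bullet> x" "\<Phi> (x,t) \<le> 1" by force
        with H have "\<psi> x \<le> 1" unfolding \<psi>_def by (meson order_trans)
        with \<open>r = y \<bullet> x\<close> show "r \<in> {y \<bullet> x | x. \<psi> x \<le> 1}" by blast
      qed
      with setsub[of y] show "dual_norm \<psi> y = dual_norm \<Phi> (y, 0)"
        unfolding dual_norm_def by simp
    qed
  next
    assume E: "\<forall>y. dual_norm \<psi> y = dual_norm \<Phi> (y, 0)"
    show "\<forall>x t. \<Phi> (x, 0) \<le> \<Phi> (x, t)"
    proof (rule ccontr)
      assume "\<not> ?thesis"
      then obtain x0 t0 where lt: "\<Phi> (x0, t0) < \<Phi> (x0, 0)" using not_le by blast
      define s where "s = \<Phi> (x0, t0)"
      have "s \<noteq> 0"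
      proof
        assume "s = 0"
        hence "norm (x0, t0) = 0" using c(2)[of "(x0,t0)"] c(1) N(2)[of "(x0,t0)"]
          unfolding s_def by (simp add: mult_le_0_iff)
        hence "x0 = 0" by (simp add: norm_Pair)
        hence "\<Phi> (x0, 0) = 0" using N(3)[of 0 "(0,0)"] by simp
        with lt N(2) show False by (metis not_less)
      qed
      hence spos: "s > 0" using N(2)[of "(x0,t0)"] unfolding s_def by linarith
      define x where "x = (1/s) *\<^sub>R x0"
      define t where "t = (1/s) * t0"
      have Pxt: "\<Phi> (x, t) = 1"
        using N(3)[of "1/s" "(x0,t0)"] spos unfolding x_def t_def s_def by simp
      have Px0: "\<psi> x > 1"
        using N(3)[of "1/s" "(x0,0)"] spos lt unfolding x_def \<psi>_def s_def by simp
      define K where "K = {z. \<psi> z \<le> 1}"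
      have cpsi: "convex_on UNIV \<psi>" using psinorm unfolding is_norm_fun_def by blast
      have "convex K" unfolding K_def
      proof (rule convexI)
        fix a b :: "real^'n" and u v :: real
        assume a: "a \<in> {z. \<psi> z \<le> 1}" and b: "b \<in> {z. \<psi> z \<le> 1}"
          and uv: "0 \<le> u" "0 \<le> v" "u + v = 1"
        have "\<psi> (u *\<^sub>R a + v *\<^sub>R b) \<le> u * \<psi> a + v * \<psi> b"
          using convex_onD[OF cpsi, of v a b] uv by (simp add: eq_diff_eq[symmetric])
        also have "\<dots> \<le> u * 1 + v * 1"
          using a b uv by (intro add_mono mult_left_mono) auto
        finally show "u *\<^sub>R a + v *\<^sub>R b \<in> {z. \<psi> z \<le> 1}" using uv by simp
      qed
      have "continuous_on UNIV \<psi>" by (rule convex_on_continuous[OF open_UNIV cpsi])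
      hence "closed K" unfolding K_def
        by (intro closed_Collect_le) (auto intro: continuous_on_const)
      moreover have "x \<notin> K" using Px0 unfolding K_def by simp
      ultimately obtain a b where ab: "a \<bullet> x < b" "\<forall>z\<in>K. b < a \<bullet> z"
        using separating_hyperplane_closed_point[OF \<open>convex K\<close>] by blast
      define y where "y = - a"
      have "dual_norm \<psi> y \<le> - b"
        unfolding dual_norm_def
      proof (rule cSup_least[OF dual_ne[OF psinorm]])
        fix r assume "r \<in> {y \<bullet> x | x. \<psi> x \<le> 1}"
        then obtain z where "r = y \<bullet> z" "z \<in> K" unfolding K_def by blast
        thus "r \<le> - b" using ab(2) unfolding y_def by force
      qed
      moreover have "y \<bullet> x \<le> dual_norm \<Phi> (y, 0)"
        unfolding dual_norm_def
      proof (rule cSup_upper[OF _ dual_bdd[OF assms(1)]])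
        show "y \<bullet> x \<in> {(y, 0) \<bullet> z | z. \<Phi> z \<le> 1}"
          using Pxt by (intro CollectI exI[of _ "(x,t)"]) simp
      qed
      moreover have "y \<bullet> x > - b" using ab(1) unfolding y_def by simp
      ultimately show False using E by force
    qed
  qed
  show ?thesis using ineq eq by blast
qed

end
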